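(* Let $G_1$ and $G_2$ be the local OPERA DAGs held by two honest nodes. Then $G_1$ and $G_2$ are consistent, i.e. for every event $v$ contained in both $G_1$ and $G_2$ we have $G_1[v] = G_2[v]$.
   Context: An OPERA DAG is a finite directed acyclic graph $G=(V,E)$ whose vertices are event blocks (events). Each event contains a list of references to its parent events, given by their cryptographic hashes. The edge $(v_i,v_j)\in E$ means that $v_i$ references $v_j$ as a parent. Cryptographic hashes are assumed secure, so the hash references of an event determine its parents uniquely. An honest node adds a received or created event $v$ to its local OPERA DAG only if it already has all the parents referenced by $v$, and it then adds the edges from $v$ to those parents. For a vertex $v$ of $G$, $G[v]=(V_v,E_v)$ denotes the subgraph of $G$ induced on $V_v$, the set consisting of $v$ and all its ancestors (the vertices reachable from $v$ by following edges). Two OPERA DAGs $G_1,G_2$ are consistent, written $G_1\sim G_2$, if $G_1[v]=G_2[v]$ for every event $v$ contained in both. *)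

theory Defs
  imports Main
begin

(* An OPERA DAG is a pair (V, E) of a set of events and a set of edges;
   (vi, vj) \<in> E means that vi references vj as a parent.
   Every event v carries a list of hash references refs v to its parents;
   hash :: 'e \<Rightarrow> 'h is the cryptographic hash of an event. *)

type_synonym 'e dag = "'e set \<times> ('e \<times> 'e) set"

inductive_set honest_dag :: "('e \<Rightarrow> 'h) \<Rightarrow> ('e \<Rightarrow> 'h list) \<Rightarrow> 'e dag set"
  for hash :: "'e \<Rightarrow> 'h" and refs :: "'e \<Rightarrow> 'h list"
where
  empty: "({}, {}) \<in> honest_dag hash refs"
| add: "\<lbrakk> (V, E) \<in> honest_dag hash refs; v \<notin> V;
          \<forall>r \<in> set (refs v). \<exists>u \<in> V. hash u = r \<rbrakk>
        \<Longrightarrow> (insert v V, E \<union> {(v, u) | u. u \<in> V \<and> hash u \<in> set (refs v)})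
              \<in> honest_dag hash refs"

definition ancestors_of :: "'e dag \<Rightarrow> 'e \<Rightarrow> 'e set" where
  "ancestors_of G v = {u. (v, u) \<in> (snd G)\<^sup>*}"

definition sub_dag :: "'e dag \<Rightarrow> 'e \<Rightarrow> 'e dag" where
  "sub_dag G v = (ancestors_of G v, snd G \<inter> (ancestors_of G v \<times> ancestors_of G v))"

definition consistent :: "'e dag \<Rightarrow> 'e dag \<Rightarrow> bool" where
  "consistent G1 G2 \<longleftrightarrow> (\<forall>v. v \<in> fst G1 \<and> v \<in> fst G2 \<longrightarrow> sub_dag G1 v = sub_dag G2 v)"

end

theory Submission
  imports Defs
begin

lemma inv0:
  assumes "inj hash" and "(V0,E0) \<in> honest_dag hash refs"
  shows "E0 = {(v,u). v \<in> V0 \<and> hash u \<in> set (refs v)} \<and>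
         (\<forall>v\<in>V0. \<forall>u. hash u \<in> set (refs v) \<longrightarrow> u \<in> V0)"
  using assms(2)
proof (induction rule: honest_dag.induct)
  case empty
  then show ?case by simp
next
  case (add V E v)
  have cl: "\<forall>u. hash u \<in> set (refs v) \<longrightarrow> u \<in> V"
  proof (intro allI impI)
    fix u assume "hash u \<in> set (refs v)"
    then obtain u' where "u' \<in> V" "hash u' = hash u" using add.hyps(3) by blast
    then show "u \<in> V" using assms(1) by (metis injD)
  qed
  show ?case using add.IH cl by auto
qed

lemma inv:
  assumes "inj hash" and "G \<in> honest_dag hash refs"
  shows "snd G = {(v,u). v \<in> fst G \<and> hash u \<in> set (refs v)} \<and>
         (\<forall>v\<in>fst G. \<forall>u. hash u \<in> set (refs v) \<longrightarrow> u \<in> fst G)"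
  using inv0[OF assms(1), of "fst G" "snd G"] assms(2) by simp

lemma anc:
  assumes "inj hash" and "G \<in> honest_dag hash refs" and "v \<in> fst G"
  shows "ancestors_of G v = {u. (v,u) \<in> {(x,y). hash y \<in> set (refs x)}\<^sup>*}"
proof -
  let ?R = "{(x,y). hash y \<in> set (refs x)}"
  from inv[OF assms(1,2)] have E: "snd G = {(v,u). v \<in> fst G \<and> hash u \<in> set (refs v)}"
    and cl: "\<forall>v\<in>fst G. \<forall>u. hash u \<in> set (refs v) \<longrightarrow> u \<in> fst G" by auto
  have 1: "(v,u) \<in> (snd G)\<^sup>* \<Longrightarrow> (v,u) \<in> ?R\<^sup>*" for u
    by (induction rule: rtrancl_induct) (auto simp: E intro: rtrancl_into_rtrancl)
  have 2: "(v,u) \<in> ?R\<^sup>* \<Longrightarrow> u \<in> fst G \<and> (v,u) \<in> (snd G)\<^sup>*" for u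
  proof (induction rule: rtrancl_induct)
    case base then show ?case using assms(3) by simp
  next
    case (step y z)
    then have "(y,z) \<in> snd G" "z \<in> fst G" using E cl by auto
    then show ?case using step by (auto intro: rtrancl_into_rtrancl)
  qed
  show ?thesis unfolding ancestors_of_def using 1 2 by blast
qed

lemma sub:
  assumes "inj hash" and "G \<in> honest_dag hash refs" and "v \<in> fst G"
  shows "sub_dag G v = ({u. (v,u) \<in> {(x,y). hash y \<in> set (refs x)}\<^sup>*},
     {(x,y). hash y \<in> set (refs x)} \<inter> ({u. (v,u) \<in> {(x,y). hash y \<in> set (refs x)}\<^sup>*} \<times> {u. (v,u) \<in> {(x,y). hash y \<in> set (refs x)}\<^sup>*}))"
proof -
  from inv[OF assms(1,2)] have E: "snd G = {(v,u). v \<in> fst G \<and> hash u \<in> set (refs v)}"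
    and cl: "\<forall>v\<in>fst G. \<forall>u. hash u \<in> set (refs v) \<longrightarrow> u \<in> fst G" by auto
  have A: "ancestors_of G v \<subseteq> fst G"
    unfolding ancestors_of_def
  proof
    fix u assume "u \<in> {u. (v, u) \<in> (snd G)\<^sup>*}"
    then have "(v,u) \<in> (snd G)\<^sup>*" by simp
    then show "u \<in> fst G" by (induction rule: rtrancl_induct) (use cl in \<open>auto simp: E assms(3)\<close>)
  qed
  show ?thesis unfolding sub_dag_def anc[OF assms, symmetric] using A E by auto
qed

theorem mainTheorem1:
  fixes hash :: "'e \<Rightarrow> 'h" and refs :: "'e \<Rightarrow> 'h list"
    and G1 G2 :: "'e dag"
  assumes "inj hash"
    and "G1 \<in> honest_dag hash refs"
    and "G2 \<in> honest_dag hash refs"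
  shows "consistent G1 G2"
  unfolding consistent_def
  using sub[OF assms(1,2)] sub[OF assms(1,3)] by auto

end
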